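(* Let $k$ be a finite field of odd characteristic, $b:V\times V\to W$ a non-degenerate Hermitian $k$-bilinear map, and $\mathcal{X}$ a direct sum decomposition of $V$ with associated set $\mathcal{E}=\mathcal{E}(\mathcal{X})$ of supplementary idempotents. (i) $\mathcal{E}\subseteq\operatorname{Sym}(b)$ if and only if $\mathcal{X}$ is a $\perp$-decomposition of $b$. (ii) $\mathcal{X}$ is a fully refined $\perp$-decomposition of $b$ if and only if $\mathcal{E}$ is a frame of the Jordan algebra $\operatorname{Sym}(b)$. (iii) If $\mathcal{X}$ is a $\perp$-decomposition and $(\alpha,\hat\alpha)\in\operatorname{Isom}^*(b)$, then $\mathcal{X}\alpha=\mathcal{X}(\alpha^{-1}\mathcal{E}\alpha)$ and $\alpha^{-1}\mathcal{E}\alpha=\mathcal{E}(\mathcal{X}\alpha)$, where $\alpha^{-1}\mathcal{E}\alpha=\{\alpha^{-1}e\alpha: e\in\mathcal{E}\}$. In particular $\operatorname{Isom}^*(b)$ acts (by conjugation) on the set of all frames of $\operatorname{Sym}(b)$.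
   Context: $b$ is Hermitian if $W=b(V,V)$ and $b(u,v)=b(v,u)\theta$ for some $\theta\in\mathrm{GL}(W)$; non-degenerate if $b(u,V)=0=b(V,u)$ implies $u=0$. $\operatorname{Sym}(b)=\{f\in\operatorname{End}V: b(uf,v)=b(u,vf)\ \forall u,v\}$, a Jordan algebra under $x\bullet y=\tfrac12(xy+yx)$. For a direct decomposition $\mathcal{X}$ of $V$, $\mathcal{E}(\mathcal{X})$ is the set of projections $e_X$ ($X\in\mathcal{X}$) onto $X$ along the sum of the other members; for a set $\mathcal{F}$ of supplementary idempotents (pairwise orthogonal, summing to $1$) of $\operatorname{End}V$, $\mathcal{X}(\mathcal{F})=\{Vf: f\in\mathcal{F}\}$. A $\perp$-decomposition of $b$ is a set of subspaces, pairwise $b$-orthogonal ($b(X,Y)=0$ for distinct $X,Y$), generating $V$, with no proper subset generating $V$; it is fully refined if each restriction $b_X:X\times X\to b(X,X)$ has no $\perp$-decomposition other than $\{X\}$. In a Jordan algebra, idempotents $e,f$ are orthogonal if $e\bullet f=efe=fef=0$; an idempotent is primitive if it is not a sum of two proper (non-zero, non-identity) orthogonal idempotents; a frame is a set of primitive pairwise orthogonal idempotents summing to $1$. $\operatorname{Isom}^*(b)=\{(\alpha,\hat\alpha)\in\mathrm{GL}(V)\times\mathrm{GL}(W): b(u\alpha,v\alpha)=b(u,v)\hat\alpha\}$. *)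

theory Defs
  imports Complex_Main
begin

text \<open>Maps act on the left here: the paper's u f is f u, the paper's product x y
  (first x then y) is y \<circ> x, and the paper's conjugate alpha^-1 e alpha is
  alpha \<circ> e \<circ> inv alpha.\<close>

definition bilinear_map ::
  "('k::field \<Rightarrow> 'v::ab_group_add \<Rightarrow> 'v) \<Rightarrow> ('k \<Rightarrow> 'w::ab_group_add \<Rightarrow> 'w) \<Rightarrow> ('v \<Rightarrow> 'v \<Rightarrow> 'w) \<Rightarrow> bool" where
  "bilinear_map sV sW b \<longleftrightarrow>
     (\<forall>v. Vector_Spaces.linear sV sW (\<lambda>u. b u v)) \<and> (\<forall>u. Vector_Spaces.linear sV sW (b u))"

definition hermitian ::
  "('k::field \<Rightarrow> 'v::ab_group_add \<Rightarrow> 'v) \<Rightarrow> ('k \<Rightarrow> 'w::ab_group_add \<Rightarrow> 'w) \<Rightarrow> ('v \<Rightarrow> 'v \<Rightarrow> 'w) \<Rightarrow> bool" where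
  "hermitian sV sW b \<longleftrightarrow>
     module.span sW {b u v | u v. True} = UNIV \<and>
     (\<exists>\<theta>. Vector_Spaces.linear sW sW \<theta> \<and> bij \<theta> \<and> (\<forall>u v. b u v = \<theta> (b v u)))"

definition nondegenerate :: "('v::ab_group_add \<Rightarrow> 'v \<Rightarrow> 'w::ab_group_add) \<Rightarrow> bool" where
  "nondegenerate b \<longleftrightarrow> (\<forall>u. (\<forall>v. b u v = 0) \<and> (\<forall>v. b v u = 0) \<longrightarrow> u = 0)"

definition Sym ::
  "('k::field \<Rightarrow> 'v::ab_group_add \<Rightarrow> 'v) \<Rightarrow> ('v \<Rightarrow> 'v \<Rightarrow> 'w) \<Rightarrow> ('v \<Rightarrow> 'v) set" where
  "Sym sV b = {f. Vector_Spaces.linear sV sV f \<and> (\<forall>u v. b (f u) v = b u (f v))}"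

definition direct_decomp :: "('k::field \<Rightarrow> 'v::ab_group_add \<Rightarrow> 'v) \<Rightarrow> 'v set set \<Rightarrow> bool" where
  "direct_decomp sV \<X> \<longleftrightarrow> finite \<X> \<and>
     (\<forall>X\<in>\<X>. module.subspace sV X \<and> X \<noteq> {0}) \<and>
     module.span sV (\<Union>\<X>) = UNIV \<and>
     (\<forall>X\<in>\<X>. X \<inter> module.span sV (\<Union>(\<X> - {X})) = {0})"

definition proj :: "('k::field \<Rightarrow> 'v::ab_group_add \<Rightarrow> 'v) \<Rightarrow> 'v set set \<Rightarrow> 'v set \<Rightarrow> 'v \<Rightarrow> 'v" where
  "proj sV \<X> X u = (THE x. x \<in> X \<and> u - x \<in> module.span sV (\<Union>(\<X> - {X})))"

definition proj_set :: "('k::field \<Rightarrow> 'v::ab_group_add \<Rightarrow> 'v) \<Rightarrow> 'v set set \<Rightarrow> ('v \<Rightarrow> 'v) set" where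
  "proj_set sV \<X> = (\<lambda>X. proj sV \<X> X) ` \<X>"

definition decomp_of :: "('v \<Rightarrow> 'v) set \<Rightarrow> 'v set set" where
  "decomp_of F = (\<lambda>f. range f) ` F"

definition b_orth :: "('v \<Rightarrow> 'v \<Rightarrow> 'w::zero) \<Rightarrow> 'v set \<Rightarrow> 'v set \<Rightarrow> bool" where
  "b_orth b X Y \<longleftrightarrow> (\<forall>x\<in>X. \<forall>y\<in>Y. b x y = 0)"

definition perp_decomp_on ::
  "('k::field \<Rightarrow> 'v::ab_group_add \<Rightarrow> 'v) \<Rightarrow> ('v \<Rightarrow> 'v \<Rightarrow> 'w::zero) \<Rightarrow> 'v set \<Rightarrow> 'v set set \<Rightarrow> bool" where
  "perp_decomp_on sV b U \<X> \<longleftrightarrow>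
     (\<forall>X\<in>\<X>. module.subspace sV X \<and> X \<subseteq> U) \<and>
     (\<forall>X\<in>\<X>. \<forall>Y\<in>\<X>. X \<noteq> Y \<longrightarrow> b_orth b X Y) \<and>
     module.span sV (\<Union>\<X>) = U \<and>
     (\<forall>\<Y>. \<Y> \<subset> \<X> \<longrightarrow> module.span sV (\<Union>\<Y>) \<noteq> U)"

definition perp_decomp ::
  "('k::field \<Rightarrow> 'v::ab_group_add \<Rightarrow> 'v) \<Rightarrow> ('v \<Rightarrow> 'v \<Rightarrow> 'w::zero) \<Rightarrow> 'v set set \<Rightarrow> bool" where
  "perp_decomp sV b \<X> \<longleftrightarrow> perp_decomp_on sV b UNIV \<X>"

definition fully_refined ::
  "('k::field \<Rightarrow> 'v::ab_group_add \<Rightarrow> 'v) \<Rightarrow> ('v \<Rightarrow> 'v \<Rightarrow> 'w::zero) \<Rightarrow> 'v set set \<Rightarrow> bool" where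
  "fully_refined sV b \<X> \<longleftrightarrow> perp_decomp sV b \<X> \<and>
     (\<forall>X\<in>\<X>. \<forall>\<Y>. perp_decomp_on sV b X \<Y> \<longrightarrow> \<Y> = {X})"

definition jprod :: "('k::field \<Rightarrow> 'v::ab_group_add \<Rightarrow> 'v) \<Rightarrow> ('v \<Rightarrow> 'v) \<Rightarrow> ('v \<Rightarrow> 'v) \<Rightarrow> 'v \<Rightarrow> 'v" where
  "jprod sV x y = (\<lambda>u. sV (inverse 2) (y (x u) + x (y u)))"

definition j_idempotent :: "('k::field \<Rightarrow> 'v::ab_group_add \<Rightarrow> 'v) \<Rightarrow> ('v \<Rightarrow> 'v) \<Rightarrow> bool" where
  "j_idempotent sV e \<longleftrightarrow> jprod sV e e = e"

definition j_orthogonal :: "('k::field \<Rightarrow> 'v::ab_group_add \<Rightarrow> 'v) \<Rightarrow> ('v \<Rightarrow> 'v) \<Rightarrow> ('v \<Rightarrow> 'v) \<Rightarrow> bool" where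
  "j_orthogonal sV e f \<longleftrightarrow> jprod sV e f = (\<lambda>_. 0) \<and> e \<circ> f \<circ> e = (\<lambda>_. 0) \<and> f \<circ> e \<circ> f = (\<lambda>_. 0)"

definition j_primitive ::
  "('k::field \<Rightarrow> 'v::ab_group_add \<Rightarrow> 'v) \<Rightarrow> ('v \<Rightarrow> 'v) set \<Rightarrow> ('v \<Rightarrow> 'v) \<Rightarrow> bool" where
  "j_primitive sV J e \<longleftrightarrow> e \<in> J \<and> j_idempotent sV e \<and>
     \<not> (\<exists>f\<in>J. \<exists>g\<in>J. j_idempotent sV f \<and> j_idempotent sV g \<and>
          f \<noteq> (\<lambda>_. 0) \<and> f \<noteq> id \<and> g \<noteq> (\<lambda>_. 0) \<and> g \<noteq> id \<and>
          j_orthogonal sV f g \<and> e = (\<lambda>u. f u + g u))"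

definition j_frame ::
  "('k::field \<Rightarrow> 'v::ab_group_add \<Rightarrow> 'v) \<Rightarrow> ('v \<Rightarrow> 'v) set \<Rightarrow> ('v \<Rightarrow> 'v) set \<Rightarrow> bool" where
  "j_frame sV J F \<longleftrightarrow> finite F \<and> (\<forall>e\<in>F. j_primitive sV J e) \<and>
     (\<forall>e\<in>F. \<forall>f\<in>F. e \<noteq> f \<longrightarrow> j_orthogonal sV e f) \<and>
     (\<lambda>u. \<Sum>e\<in>F. e u) = id"

definition Isom_star ::
  "('k::field \<Rightarrow> 'v::ab_group_add \<Rightarrow> 'v) \<Rightarrow> ('k \<Rightarrow> 'w::ab_group_add \<Rightarrow> 'w) \<Rightarrow> ('v \<Rightarrow> 'v \<Rightarrow> 'w)
     \<Rightarrow> (('v \<Rightarrow> 'v) \<times> ('w \<Rightarrow> 'w)) set" where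
  "Isom_star sV sW b = {(\<alpha>, \<alpha>'). Vector_Spaces.linear sV sV \<alpha> \<and> bij \<alpha> \<and>
      Vector_Spaces.linear sW sW \<alpha>' \<and> bij \<alpha>' \<and> (\<forall>u v. b (\<alpha> u) (\<alpha> v) = \<alpha>' (b u v))}"

definition conj_set :: "('v \<Rightarrow> 'v) \<Rightarrow> ('v \<Rightarrow> 'v) set \<Rightarrow> ('v \<Rightarrow> 'v) set" where
  "conj_set \<alpha> E = (\<lambda>e. \<alpha> \<circ> e \<circ> inv \<alpha>) ` E"

end

theory Submission
  imports Defs
begin


definition lin :: "('k::field \<Rightarrow> 'v::ab_group_add \<Rightarrow> 'v) \<Rightarrow> ('v \<Rightarrow> 'v) \<Rightarrow> bool" where
  "lin s f \<longleftrightarrow> (\<forall>x y. f (x+y) = f x + f y) \<and> (\<forall>c x. f (s c x) = s c (f x))"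

context vector_space
begin

lemma linear_lin: "Vector_Spaces.linear scale scale f \<longleftrightarrow> lin scale f"
  unfolding Vector_Spaces.linear_iff lin_def using vector_space_axioms by auto

lemma lin_add: "lin scale f \<Longrightarrow> f (x + y) = f x + f y" by (simp add: lin_def)
lemma lin_scale: "lin scale f \<Longrightarrow> f (scale c x) = scale c (f x)" by (simp add: lin_def)
lemma lin_0: "lin scale f \<Longrightarrow> f 0 = 0"
  using lin_add[of f 0 0] by simp
lemma lin_diff: "lin scale f \<Longrightarrow> f (x - y) = f x - f y"
  using lin_add[of f "x - y" y] by (simp add: algebra_simps)
lemma lin_sum: "lin scale f \<Longrightarrow> f (sum g A) = (\<Sum>a\<in>A. f (g a))"
  by (induct A rule: infinite_finite_induct) (auto simp: lin_0 lin_add)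

lemma lin_comp: "lin scale f \<Longrightarrow> lin scale g \<Longrightarrow> lin scale (f \<circ> g)"
  by (simp add: lin_def)

lemma lin_inv: assumes "lin scale f" "bij f" shows "lin scale (inv f)"
proof -
  have fi: "f (inv f x) = x" for x using assms(2) by (simp add: bij_is_surj surj_f_inv_f)
  have if_: "inv f (f x) = x" for x using assms(2) by (simp add: bij_is_inj)
  show ?thesis unfolding lin_def
  proof (intro conjI allI)
    fix x y show "inv f (x + y) = inv f x + inv f y"
      by (metis fi if_ lin_add[OF assms(1)])
  next
    fix c x show "inv f (scale c x) = scale c (inv f x)"
      by (metis fi if_ lin_scale[OF assms(1)])
  qed
qed


lemma dd_sub: "direct_decomp scale \<X> \<Longrightarrow> X \<in> \<X> \<Longrightarrow> subspace X"
  by (simp add: direct_decomp_def)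
lemma dd_nz: "direct_decomp scale \<X> \<Longrightarrow> X \<in> \<X> \<Longrightarrow> X \<noteq> {0}"
  by (simp add: direct_decomp_def)
lemma dd_indep: "direct_decomp scale \<X> \<Longrightarrow> X \<in> \<X> \<Longrightarrow> X \<inter> span (\<Union>(\<X> - {X})) = {0}"
  by (simp add: direct_decomp_def)
lemma dd_fin: "direct_decomp scale \<X> \<Longrightarrow> finite \<X>"
  by (simp add: direct_decomp_def)
lemma dd_span: "direct_decomp scale \<X> \<Longrightarrow> span (\<Union>\<X>) = UNIV"
  by (simp add: direct_decomp_def)

lemma dd_exists:
  assumes dd: "direct_decomp scale \<X>" and X: "X \<in> \<X>"
  shows "\<exists>x\<in>X. u - x \<in> span (\<Union>(\<X> - {X}))"
proof -
  have U: "\<Union>\<X> = X \<union> \<Union>(\<X> - {X})" using X by blast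
  have "u \<in> span (\<Union>\<X>)" using dd_span[OF dd] by simp
  then have "u \<in> span (X \<union> \<Union>(\<X> - {X}))" by (simp only: U)
  then obtain x y where "u = x + y" "x \<in> span X" "y \<in> span (\<Union>(\<X> - {X}))" by (auto simp: span_Un)
  moreover have "span X = X" using dd_sub[OF dd X] by simp
  ultimately show ?thesis by (metis add_diff_cancel_left')
qed

lemma dd_unique:
  assumes dd: "direct_decomp scale \<X>" and X: "X \<in> \<X>"
    and "x \<in> X" "x' \<in> X" "u - x \<in> span (\<Union>(\<X> - {X}))" "u - x' \<in> span (\<Union>(\<X> - {X}))"
  shows "x = x'"
proof -
  have "(u - x) - (u - x') \<in> span (\<Union>(\<X> - {X}))" using assms(5,6) by (rule span_diff)
  then have a: "x' - x \<in> span (\<Union>(\<X> - {X}))" by simp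
  have "x' - x \<in> X" using dd_sub[OF dd X] assms(3,4) by (simp add: subspace_diff)
  with a dd_indep[OF dd X] have "x' - x = 0" by blast
  then show ?thesis by simp
qed

lemma proj_prop:
  assumes dd: "direct_decomp scale \<X>" and X: "X \<in> \<X>"
  shows "proj scale \<X> X u \<in> X \<and> u - proj scale \<X> X u \<in> span (\<Union>(\<X> - {X}))"
  unfolding proj_def
  apply (rule theI')
  using dd_exists[OF dd X] dd_unique[OF dd X] by blast

lemma proj_in: "direct_decomp scale \<X> \<Longrightarrow> X \<in> \<X> \<Longrightarrow> proj scale \<X> X u \<in> X"
  using proj_prop by blast
lemma proj_rest: "direct_decomp scale \<X> \<Longrightarrow> X \<in> \<X> \<Longrightarrow> u - proj scale \<X> X u \<in> span (\<Union>(\<X> - {X}))"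
  using proj_prop by blast

lemma proj_eq:
  assumes dd: "direct_decomp scale \<X>" and X: "X \<in> \<X>" and "x \<in> X" "u - x \<in> span (\<Union>(\<X> - {X}))"
  shows "proj scale \<X> X u = x"
  using dd_unique[OF dd X proj_in[OF dd X] assms(3) proj_rest[OF dd X] assms(4)] .

lemma proj_lin:
  assumes dd: "direct_decomp scale \<X>" and X: "X \<in> \<X>"
  shows "lin scale (proj scale \<X> X)"
  unfolding lin_def
proof (intro conjI allI)
  fix x y
  show "proj scale \<X> X (x + y) = proj scale \<X> X x + proj scale \<X> X y"
  proof (rule proj_eq[OF dd X])
    show "proj scale \<X> X x + proj scale \<X> X y \<in> X"
      using dd_sub[OF dd X] proj_in[OF dd X] by (simp add: subspace_add)
    have "(x - proj scale \<X> X x) + (y - proj scale \<X> X y) \<in> span (\<Union>(\<X> - {X}))"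
      using proj_rest[OF dd X] by (simp add: span_add)
    then show "x + y - (proj scale \<X> X x + proj scale \<X> X y) \<in> span (\<Union>(\<X> - {X}))"
      by (simp add: algebra_simps)
  qed
next
  fix c x
  show "proj scale \<X> X (scale c x) = scale c (proj scale \<X> X x)"
  proof (rule proj_eq[OF dd X])
    show "scale c (proj scale \<X> X x) \<in> X"
      using dd_sub[OF dd X] proj_in[OF dd X] by (simp add: subspace_scale)
    have "scale c (x - proj scale \<X> X x) \<in> span (\<Union>(\<X> - {X}))"
      using proj_rest[OF dd X] by (simp add: span_scale)
    then show "scale c x - scale c (proj scale \<X> X x) \<in> span (\<Union>(\<X> - {X}))"
      by (simp add: scale_right_diff_distrib)
  qed
qed

lemma proj_self: "direct_decomp scale \<X> \<Longrightarrow> X \<in> \<X> \<Longrightarrow> x \<in> X \<Longrightarrow> proj scale \<X> X x = x"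
  by (rule proj_eq) (auto simp: span_zero)

lemma proj_restz: "direct_decomp scale \<X> \<Longrightarrow> X \<in> \<X> \<Longrightarrow> s \<in> span (\<Union>(\<X> - {X})) \<Longrightarrow> proj scale \<X> X s = 0"
  by (rule proj_eq) (auto simp: subspace_0 dd_sub)

lemma proj_other: "direct_decomp scale \<X> \<Longrightarrow> X \<in> \<X> \<Longrightarrow> Y \<in> \<X> \<Longrightarrow> X \<noteq> Y \<Longrightarrow> y \<in> Y
   \<Longrightarrow> proj scale \<X> X y = 0"
  by (rule proj_restz) (auto intro: span_base)

lemma proj_sum:
  assumes dd: "direct_decomp scale \<X>"
  shows "(\<Sum>X\<in>\<X>. proj scale \<X> X u) = u"
proof -
  have fin: "finite \<X>" using dd_fin[OF dd] .
  let ?T = "{u. (\<Sum>X\<in>\<X>. proj scale \<X> X u) = u}"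
  have "subspace ?T"
  proof (rule subspaceI)
    show "0 \<in> ?T" using lin_0[OF proj_lin[OF dd]] by simp
  next
    fix x y assume "x \<in> ?T" "y \<in> ?T"
    moreover have "(\<Sum>X\<in>\<X>. proj scale \<X> X (x+y)) = (\<Sum>X\<in>\<X>. proj scale \<X> X x + proj scale \<X> X y)"
      by (rule sum.cong) (auto simp: lin_add[OF proj_lin[OF dd]])
    ultimately show "x + y \<in> ?T" by (simp add: sum.distrib)
  next
    fix c x assume "x \<in> ?T"
    moreover have "(\<Sum>X\<in>\<X>. proj scale \<X> X (scale c x)) = (\<Sum>X\<in>\<X>. scale c (proj scale \<X> X x))"
      by (rule sum.cong) (auto simp: lin_scale[OF proj_lin[OF dd]])
    ultimately show "scale c x \<in> ?T" by (simp add: scale_sum_right[symmetric])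
  qed
  moreover have "\<Union>\<X> \<subseteq> ?T"
  proof
    fix y assume "y \<in> \<Union>\<X>"
    then obtain Y where Y: "Y \<in> \<X>" "y \<in> Y" by blast
    have "(\<Sum>X\<in>\<X>. proj scale \<X> X y) = proj scale \<X> Y y + (\<Sum>X\<in>\<X>-{Y}. proj scale \<X> X y)"
      using fin Y by (simp add: sum.remove)
    also have "(\<Sum>X\<in>\<X>-{Y}. proj scale \<X> X y) = 0"
      by (rule sum.neutral) (use Y in \<open>auto intro: proj_other[OF dd]\<close>)
    finally show "y \<in> ?T" using proj_self[OF dd Y] by simp
  qed
  ultimately have "span (\<Union>\<X>) \<subseteq> ?T" by (rule span_minimal[rotated])
  then show ?thesis using dd_span[OF dd] by auto
qed

lemma proj_idem: "direct_decomp scale \<X> \<Longrightarrow> X \<in> \<X> \<Longrightarrow> proj scale \<X> X (proj scale \<X> X u) = proj scale \<X> X u"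
  by (simp add: proj_self proj_in)
lemma proj_orth: "direct_decomp scale \<X> \<Longrightarrow> X \<in> \<X> \<Longrightarrow> Y \<in> \<X> \<Longrightarrow> X \<noteq> Y \<Longrightarrow> proj scale \<X> X (proj scale \<X> Y u) = 0"
  by (simp add: proj_other proj_in)
lemma range_proj: "direct_decomp scale \<X> \<Longrightarrow> X \<in> \<X> \<Longrightarrow> range (proj scale \<X> X) = X"
  using proj_in proj_self by (metis image_subset_iff rangeI subsetI subset_antisym)
lemma proj_inj: "direct_decomp scale \<X> \<Longrightarrow> inj_on (proj scale \<X>) \<X>"
  by (metis inj_onI range_proj)

end



locale bset = vector_space scale for scale :: "'k::field \<Rightarrow> 'v::ab_group_add \<Rightarrow> 'v" +
  fixes sW :: "'k \<Rightarrow> 'w::ab_group_add \<Rightarrow> 'w" and b :: "'v \<Rightarrow> 'v \<Rightarrow> 'w"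
  assumes W: "vector_space sW" and bil: "bilinear_map scale sW b"
    and nd: "nondegenerate b" and two: "(2::'k) \<noteq> 0"
begin

lemma Wm: "module sW" using W by (simp add: module_iff_vector_space)

lemma bR: "b x (u + v) = b x u + b x v" "b x (scale c u) = sW c (b x u)"
  using bil unfolding bilinear_map_def Vector_Spaces.linear_iff by auto
lemma bL: "b (u + v) x = b u x + b v x" "b (scale c u) x = sW c (b u x)"
  using bil unfolding bilinear_map_def Vector_Spaces.linear_iff by auto
lemma bR0[simp]: "b x 0 = 0" using bR(1)[of x 0 0] by simp
lemma bL0[simp]: "b 0 x = 0" using bL(1)[of 0 0 x] by simp
lemma bRdiff: "b x (u - v) = b x u - b x v" using bR(1)[of x "u - v" v] by (simp add: algebra_simps)
lemma bLdiff: "b (u - v) x = b u x - b v x" using bL(1)[of "u - v" v x] by (simp add: algebra_simps)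

lemma kerR: "subspace {v. b x v = 0}"
  by (rule subspaceI) (auto simp: bR module.scale_zero_right[OF Wm])
lemma kerL: "subspace {u. b u x = 0}"
  by (rule subspaceI) (auto simp: bL module.scale_zero_right[OF Wm])

lemma orth_span:
  assumes "\<forall>a\<in>A. \<forall>c\<in>C. b a c = 0" "a \<in> span A" "c \<in> span C" shows "b a c = 0"
proof -
  have "span C \<subseteq> {v. b a v = 0}" if "a \<in> A" for a
    using assms(1) that by (intro span_minimal kerR) auto
  then have "A \<subseteq> {x. b x c = 0}" using assms(3) by auto
  then have "span A \<subseteq> {x. b x c = 0}" by (rule span_minimal) (rule kerL)
  with assms(2) show ?thesis by auto
qed

lemma Sym_iff: "f \<in> Sym scale b \<longleftrightarrow> lin scale f \<and> (\<forall>u v. b (f u) v = b u (f v))"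
  by (simp add: Sym_def linear_lin)

lemma perp_iff:
  assumes dd: "direct_decomp scale \<X>"
  shows "perp_decomp scale b \<X> \<longleftrightarrow> (\<forall>X\<in>\<X>. \<forall>Y\<in>\<X>. X \<noteq> Y \<longrightarrow> b_orth b X Y)"
proof
  assume "perp_decomp scale b \<X>" then show "\<forall>X\<in>\<X>. \<forall>Y\<in>\<X>. X \<noteq> Y \<longrightarrow> b_orth b X Y"
    by (simp add: perp_decomp_def perp_decomp_on_def)
next
  assume orth: "\<forall>X\<in>\<X>. \<forall>Y\<in>\<X>. X \<noteq> Y \<longrightarrow> b_orth b X Y"
  have min: "span (\<Union>\<Y>) \<noteq> UNIV" if "\<Y> \<subset> \<X>" for \<Y>
  proof
    assume U: "span (\<Union>\<Y>) = UNIV"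
    from that obtain X where X: "X \<in> \<X>" "X \<notin> \<Y>" by blast
    have "span (\<Union>\<Y>) \<subseteq> span (\<Union>(\<X> - {X}))" using that X by (intro span_mono) auto
    with U have "X \<subseteq> X \<inter> span (\<Union>(\<X> - {X}))" by auto
    with dd_indep[OF dd X(1)] have "X \<subseteq> {0}" by simp
    moreover have "0 \<in> X" using dd_sub[OF dd X(1)] by (rule subspace_0)
    ultimately have "X = {0}" by blast
    with dd_nz[OF dd X(1)] show False by simp
  qed
  show "perp_decomp scale b \<X>"
    unfolding perp_decomp_def perp_decomp_on_def
  proof (intro conjI)
    show "\<forall>X\<in>\<X>. subspace X \<and> X \<subseteq> UNIV" using dd_sub[OF dd] by blast
    show "\<forall>X\<in>\<X>. \<forall>Y\<in>\<X>. X \<noteq> Y \<longrightarrow> b_orth b X Y" by (rule orth)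
    show "span (\<Union>\<X>) = UNIV" by (rule dd_span[OF dd])
    show "\<forall>\<Y>. \<Y> \<subset> \<X> \<longrightarrow> span (\<Union>\<Y>) \<noteq> UNIV" using min by blast
  qed
qed

lemma proj_Sym_iff:
  assumes dd: "direct_decomp scale \<X>"
  shows "proj_set scale \<X> \<subseteq> Sym scale b \<longleftrightarrow> (\<forall>X\<in>\<X>. \<forall>Y\<in>\<X>. X \<noteq> Y \<longrightarrow> b_orth b X Y)"
proof
  assume S: "proj_set scale \<X> \<subseteq> Sym scale b"
  show "\<forall>X\<in>\<X>. \<forall>Y\<in>\<X>. X \<noteq> Y \<longrightarrow> b_orth b X Y"
  proof (intro ballI impI)
    fix X Y assume X: "X\<in>\<X>" and Y: "Y\<in>\<X>" and ne: "X\<noteq>Y"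
    have sym: "b (proj scale \<X> X u) v = b u (proj scale \<X> X v)" for u v
      using S X by (auto simp: proj_set_def Sym_iff)
    show "b_orth b X Y" unfolding b_orth_def
    proof (intro ballI)
      fix x y assume "x\<in>X" "y\<in>Y"
      have "b x y = b (proj scale \<X> X x) y" using proj_self[OF dd X \<open>x\<in>X\<close>] by simp
      also have "\<dots> = b x (proj scale \<X> X y)" by (rule sym)
      also have "\<dots> = 0" using proj_other[OF dd X Y ne \<open>y\<in>Y\<close>] by simp
      finally show "b x y = 0" .
    qed
  qed
next
  assume orth: "\<forall>X\<in>\<X>. \<forall>Y\<in>\<X>. X \<noteq> Y \<longrightarrow> b_orth b X Y"
  show "proj_set scale \<X> \<subseteq> Sym scale b"
  proof
    fix f assume "f \<in> proj_set scale \<X>"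
    then obtain X where X: "X \<in> \<X>" and f: "f = proj scale \<X> X" by (auto simp: proj_set_def)
    have o1: "\<forall>a\<in>X. \<forall>c\<in>\<Union>(\<X>-{X}). b a c = 0"
    proof (intro ballI)
      fix a c assume "a \<in> X" "c \<in> \<Union>(\<X>-{X})"
      then obtain Y where "Y \<in> \<X>" "Y \<noteq> X" "c \<in> Y" by blast
      with orth X \<open>a \<in> X\<close> show "b a c = 0" unfolding b_orth_def by metis
    qed
    have o2: "\<forall>a\<in>\<Union>(\<X>-{X}). \<forall>c\<in>X. b a c = 0"
    proof (intro ballI)
      fix a c assume "c \<in> X" "a \<in> \<Union>(\<X>-{X})"
      then obtain Y where "Y \<in> \<X>" "Y \<noteq> X" "a \<in> Y" by blast
      with orth X \<open>c \<in> X\<close> show "b a c = 0" unfolding b_orth_def by metis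
    qed
    have spX: "span X = X" using dd_sub[OF dd X] by simp
    have "b (f u) v = b u (f v)" for u v
    proof -
      have i1: "f w \<in> span X" for w by (rule span_base) (simp add: f proj_in[OF dd X])
      have i2: "w - f w \<in> span (\<Union>(\<X>-{X}))" for w using proj_rest[OF dd X] f by simp
      have z1: "b (f u) (v - f v) = 0" by (rule orth_span[OF o1 i1 i2])
      have z2: "b (u - f u) (f v) = 0" by (rule orth_span[OF o2 i2 i1])
      from z1 z2 show ?thesis by (simp add: bRdiff bLdiff)
    qed
    then show "f \<in> Sym scale b" using proj_lin[OF dd X] f by (simp add: Sym_iff)
  qed
qed

lemma jprod_self: "jprod scale f f = f \<circ> f"
proof
  fix u
  have "f (f u) + f (f u) = scale 2 (f (f u))" by (metis one_add_one scale_left_distrib scale_one)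
  then show "jprod scale f f u = (f \<circ> f) u" using two by (simp add: jprod_def)
qed

lemma jidem_iff: "j_idempotent scale f \<longleftrightarrow> f \<circ> f = f"
  by (simp add: j_idempotent_def jprod_self)

lemma jorth_D:
  assumes o: "j_orthogonal scale f g" and fl: "lin scale f" and gl: "lin scale g"
    and ff: "f \<circ> f = f" and gg: "g \<circ> g = g"
  shows "f (g u) = 0" "g (f u) = 0"
proof -
  have s: "g (f u) + f (g u) = 0" for u
    using o two by (auto simp: j_orthogonal_def jprod_def fun_eq_iff)
  have fgf: "f (g (f u)) = 0" for u using o by (auto simp: j_orthogonal_def fun_eq_iff)
  have gfg: "g (f (g u)) = 0" for u using o by (auto simp: j_orthogonal_def fun_eq_iff)
  have ff': "f (f u) = f u" for u using ff by (simp add: fun_eq_iff)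
  have gg': "g (g u) = g u" for u using gg by (simp add: fun_eq_iff)
  have "f (g (f u) + f (g u)) = 0" using s lin_0[OF fl] by simp
  then show "f (g u) = 0" using lin_add[OF fl] fgf ff' by simp
  have "g (g (f u) + f (g u)) = 0" using s lin_0[OF gl] by simp
  then show "g (f u) = 0" using lin_add[OF gl] gfg gg' by simp
qed

lemma jorth_I: "lin scale f \<Longrightarrow> lin scale g \<Longrightarrow> (\<And>u. f (g u) = 0) \<Longrightarrow> (\<And>u. g (f u) = 0) \<Longrightarrow> j_orthogonal scale f g"
  by (simp add: j_orthogonal_def jprod_def fun_eq_iff lin_0)

lemma lin_range_sub: assumes "lin scale f" shows "subspace (range f)"
proof (rule subspaceI)
  show "0 \<in> range f" using lin_0[OF assms] by (metis rangeI)
  show "x + y \<in> range f" if "x \<in> range f" "y \<in> range f" for x y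
  proof -
    from that obtain p q where "x = f p" "y = f q" by blast
    then have "x + y = f (p + q)" using lin_add[OF assms] by simp
    then show ?thesis by simp
  qed
  show "scale c x \<in> range f" if "x \<in> range f" for c x
  proof -
    from that obtain p where "x = f p" by blast
    then have "scale c x = f (scale c p)" using lin_scale[OF assms] by simp
    then show ?thesis by simp
  qed
qed

end



context bset
begin

lemma frame_of_refined:
  assumes dd: "direct_decomp scale \<X>" and fr: "fully_refined scale b \<X>"
  shows "j_frame scale (Sym scale b) (proj_set scale \<X>)"
proof -
  have pd: "perp_decomp scale b \<X>" using fr by (simp add: fully_refined_def)
  have orth: "\<forall>X\<in>\<X>. \<forall>Y\<in>\<X>. X \<noteq> Y \<longrightarrow> b_orth b X Y" using perp_iff[OF dd] pd by simp
  have inS: "proj_set scale \<X> \<subseteq> Sym scale b" using proj_Sym_iff[OF dd] orth by simp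
  have prim: "j_primitive scale (Sym scale b) (proj scale \<X> X)" if X: "X \<in> \<X>" for X
  proof -
    let ?e = "proj scale \<X> X"
    have eS: "?e \<in> Sym scale b" using inS X by (auto simp: proj_set_def)
    have eid: "j_idempotent scale ?e" by (simp add: jidem_iff fun_eq_iff proj_idem[OF dd X])
    have nosplit: "?e \<noteq> (\<lambda>u. f u + g u)"
      if fS: "f \<in> Sym scale b" and gS: "g \<in> Sym scale b"
        and fi: "j_idempotent scale f" and gi: "j_idempotent scale g"
        and f0: "f \<noteq> (\<lambda>_. 0)" and g0: "g \<noteq> (\<lambda>_. 0)" and o: "j_orthogonal scale f g" for f g
    proof
      assume e: "?e = (\<lambda>u. f u + g u)"
      have fl: "lin scale f" and fsym: "\<And>u v. b (f u) v = b u (f v)" using fS by (auto simp: Sym_iff)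
      have gl: "lin scale g" and gsym: "\<And>u v. b (g u) v = b u (g v)" using gS by (auto simp: Sym_iff)
      have ffc: "f \<circ> f = f" using fi by (simp add: jidem_iff)
      have ggc: "g \<circ> g = g" using gi by (simp add: jidem_iff)
      have ff: "f (f u) = f u" for u using ffc by (simp add: fun_eq_iff)
      have gg: "g (g u) = g u" for u using ggc by (simp add: fun_eq_iff)
      have fg: "f (g u) = 0" and gf: "g (f u) = 0" for u using jorth_D[OF o fl gl ffc ggc] by auto
      have ef: "?e (f u) = f u" for u using e ff gf by simp
      have eg: "?e (g u) = g u" for u using e gg fg by simp
      have fX: "f u \<in> X" for u using ef[of u] proj_in[OF dd X, of "f u"] by simp
      have gX: "g u \<in> X" for u using eg[of u] proj_in[OF dd X, of "g u"] by simp
      have Xsub: "subspace X" using dd_sub[OF dd X] .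
      have ZnY: "\<not> range g \<subseteq> range f"
      proof
        assume "range g \<subseteq> range f"
        have "g u = 0" for u
        proof -
          obtain w where "g u = f w" using \<open>range g \<subseteq> range f\<close> by blast
          then have "g (g u) = g (f w)" by simp
          then show ?thesis using gg gf by simp
        qed
        with g0 show False by auto
      qed
      have YnZ: "\<not> range f \<subseteq> range g"
      proof
        assume "range f \<subseteq> range g"
        have "f u = 0" for u
        proof -
          obtain w where "f u = g w" using \<open>range f \<subseteq> range g\<close> by blast
          then have "f (f u) = f (g w)" by simp
          then show ?thesis using ff fg by simp
        qed
        with f0 show False by auto
      qed
      have rf: "range f \<subseteq> X" using fX by auto
      have rg: "range g \<subseteq> X" using gX by auto
      have spf: "span (range f) = range f" using lin_range_sub[OF fl] by simp
      have spg: "span (range g) = range g" using lin_range_sub[OF gl] by simp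
      have spfg: "span (range f \<union> range g) = X"
      proof
        show "span (range f \<union> range g) \<subseteq> X" using rf rg Xsub by (intro span_minimal) auto
        show "X \<subseteq> span (range f \<union> range g)"
        proof
          fix x assume "x \<in> X"
          then have "x = f x + g x" using proj_self[OF dd X \<open>x \<in> X\<close>] e by metis
          moreover have "f x \<in> span (range f \<union> range g)" by (rule span_base) simp
          moreover have "g x \<in> span (range f \<union> range g)" by (rule span_base) simp
          ultimately show "x \<in> span (range f \<union> range g)" by (metis span_add)
        qed
      qed
      have "perp_decomp_on scale b X {range f, range g}"
        unfolding perp_decomp_on_def
      proof (intro conjI)
        show "\<forall>Y\<in>{range f, range g}. subspace Y \<and> Y \<subseteq> X"
          using lin_range_sub[OF fl] lin_range_sub[OF gl] rf rg by blast
        have o1: "b_orth b (range f) (range g)" unfolding b_orth_def using fsym fg by auto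
        have o2: "b_orth b (range g) (range f)" unfolding b_orth_def using gsym gf by auto
        show "\<forall>Y\<in>{range f, range g}. \<forall>Z\<in>{range f, range g}. Y \<noteq> Z \<longrightarrow> b_orth b Y Z"
          using o1 o2 by blast
        show "span (\<Union>{range f, range g}) = X" using spfg by simp
        show "\<forall>\<Y>. \<Y> \<subset> {range f, range g} \<longrightarrow> span (\<Union>\<Y>) \<noteq> X"
        proof (intro allI impI)
          fix \<Y> assume "\<Y> \<subset> {range f, range g}"
          then have "\<Y> = {} \<or> \<Y> = {range f} \<or> \<Y> = {range g}" by blast
          moreover have "span (\<Union>{}) \<noteq> X" using dd_nz[OF dd X] by simp
          moreover have "span (\<Union>{range f}) \<noteq> X" using spf rg ZnY by (simp del: span_eq_iff)
          moreover have "span (\<Union>{range g}) \<noteq> X" using spg rf YnZ by (simp del: span_eq_iff)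
          ultimately show "span (\<Union>\<Y>) \<noteq> X" by blast
        qed
      qed
      with fr X have "{range f, range g} = {X}" by (auto simp: fully_refined_def)
      then have "range f = range g" by blast
      with YnZ show False by simp
    qed
    show ?thesis unfolding j_primitive_def using eS eid nosplit by blast
  qed
  show ?thesis unfolding j_frame_def
  proof (intro conjI)
    show "finite (proj_set scale \<X>)" using dd_fin[OF dd] by (simp add: proj_set_def)
    show "\<forall>e\<in>proj_set scale \<X>. j_primitive scale (Sym scale b) e" using prim by (auto simp: proj_set_def)
    show "\<forall>e\<in>proj_set scale \<X>. \<forall>f\<in>proj_set scale \<X>. e \<noteq> f \<longrightarrow> j_orthogonal scale e f"
    proof (intro ballI impI)
      fix e f assume "e \<in> proj_set scale \<X>" "f \<in> proj_set scale \<X>" "e \<noteq> f"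
      then obtain X Y where X: "X \<in> \<X>" and Y: "Y \<in> \<X>" and e: "e = proj scale \<X> X"
        and f: "f = proj scale \<X> Y" and ne: "X \<noteq> Y" by (auto simp: proj_set_def)
      show "j_orthogonal scale e f"
        using jorth_I[OF proj_lin[OF dd X] proj_lin[OF dd Y]] proj_orth[OF dd X Y ne]
          proj_orth[OF dd Y X ne[symmetric]] e f by simp
    qed
    show "(\<lambda>u. \<Sum>e\<in>proj_set scale \<X>. e u) = id"
    proof
      fix u
      have "(\<Sum>e\<in>proj_set scale \<X>. e u) = (\<Sum>X\<in>\<X>. proj scale \<X> X u)"
        unfolding proj_set_def by (simp add: sum.reindex[OF proj_inj[OF dd]])
      then show "(\<Sum>e\<in>proj_set scale \<X>. e u) = id u" using proj_sum[OF dd] by simp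
    qed
  qed
qed

end



context bset
begin

lemma orth_UNIV_zero:
  assumes "\<forall>c\<in>\<Union>\<X>. b w c = 0" "\<forall>c\<in>\<Union>\<X>. b c w = 0" "span (\<Union>\<X>) = UNIV"
  shows "w = 0"
proof -
  have "b w v = 0" for v
    by (rule orth_span[of "{w}" "\<Union>\<X>"]) (use assms in \<open>auto intro: span_base\<close>)
  moreover have "b v w = 0" for v
    by (rule orth_span[of "\<Union>\<X>" "{w}"]) (use assms in \<open>auto intro: span_base\<close>)
  ultimately show ?thesis using nd unfolding nondegenerate_def by blast
qed

lemma refined_of_frame:
  assumes dd: "direct_decomp scale \<X>" and fr: "j_frame scale (Sym scale b) (proj_set scale \<X>)"
  shows "fully_refined scale b \<X>"
proof -
  have inS: "proj_set scale \<X> \<subseteq> Sym scale b" using fr by (auto simp: j_frame_def j_primitive_def)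
  have orth: "\<forall>X\<in>\<X>. \<forall>Y\<in>\<X>. X \<noteq> Y \<longrightarrow> b_orth b X Y" using proj_Sym_iff[OF dd] inS by simp
  have pd: "perp_decomp scale b \<X>" using perp_iff[OF dd] orth by simp
  have main: "\<Y> = {X}" if X: "X\<in>\<X>" and py: "perp_decomp_on scale b X \<Y>" for X \<Y>
  proof (rule ccontr)
    assume ne: "\<Y> \<noteq> {X}"
    let ?e = "proj scale \<X> X"
    let ?R = "span (\<Union>(\<X> - {X}))"
    have prim: "j_primitive scale (Sym scale b) ?e" using fr X by (auto simp: j_frame_def proj_set_def)
    have ysub: "\<And>Y. Y \<in> \<Y> \<Longrightarrow> subspace Y \<and> Y \<subseteq> X" using py by (simp add: perp_decomp_on_def)
    have yorth: "\<And>Y Y'. Y \<in> \<Y> \<Longrightarrow> Y' \<in> \<Y> \<Longrightarrow> Y \<noteq> Y' \<Longrightarrow> b_orth b Y Y'"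
      using py by (simp add: perp_decomp_on_def)
    have yspan: "span (\<Union>\<Y>) = X" using py by (simp add: perp_decomp_on_def)
    have ymin: "\<And>\<Y>'. \<Y>' \<subset> \<Y> \<Longrightarrow> span (\<Union>\<Y>') \<noteq> X" using py by (simp add: perp_decomp_on_def)
    have Xsub: "subspace X" using dd_sub[OF dd X] .
    have Xnz: "X \<noteq> {0}" using dd_nz[OF dd X] .
    have "\<Y> \<noteq> {}" using yspan Xnz by auto
    then obtain Y where Y: "Y \<in> \<Y>" by blast
    have Ysub: "subspace Y" and YX: "Y \<subseteq> X" using ysub[OF Y] by auto
    have spY: "span Y = Y" using Ysub by simp
    have notsing: "\<Y> \<noteq> {Y}"
    proof
      assume "\<Y> = {Y}"
      then have "Y = X" using yspan spY by (simp del: span_eq_iff)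
      with ne \<open>\<Y> = {Y}\<close> show False by simp
    qed
    define Z where "Z = span (\<Union>(\<Y> - {Y}))"
    have Zsub: "subspace Z" unfolding Z_def by simp
    have ZX: "Z \<subseteq> X" unfolding Z_def yspan[symmetric] by (rule span_mono) blast
    have YneX: "Y \<noteq> X"
    proof
      assume "Y = X"
      have "{Y} \<subset> \<Y>" using Y notsing by blast
      from ymin[OF this] spY \<open>Y = X\<close> show False by (simp del: span_eq_iff)
    qed
    have ZneX: "Z \<noteq> X"
    proof -
      have "\<Y> - {Y} \<subset> \<Y>" using Y by blast
      from ymin[OF this] show ?thesis unfolding Z_def .
    qed
    have Ynz: "Y \<noteq> {0}"
    proof
      assume Y0: "Y = {0}"
      have "\<Union>\<Y> \<subseteq> insert 0 (\<Union>(\<Y> - {Y}))" using Y0 by blast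
      then have "span (\<Union>\<Y>) \<subseteq> span (insert 0 (\<Union>(\<Y> - {Y})))" by (rule span_mono)
      then have "X \<subseteq> Z" by (simp only: yspan span_insert_0 Z_def)
      with ZX ZneX show False by blast
    qed
    have YZ: "span (Y \<union> Z) = X"
    proof
      show "span (Y \<union> Z) \<subseteq> X" using YX ZX Xsub by (intro span_minimal) auto
      have "\<Union>\<Y> \<subseteq> Y \<union> Z"
      proof
        fix c assume "c \<in> \<Union>\<Y>"
        show "c \<in> Y \<union> Z"
        proof (cases "c \<in> Y")
          case False
          then have "c \<in> \<Union>(\<Y> - {Y})" using \<open>c \<in> \<Union>\<Y>\<close> by blast
          then have "c \<in> Z" unfolding Z_def by (rule span_base)
          then show ?thesis by blast
        qed blast
      qed
      then have "span (\<Union>\<Y>) \<subseteq> span (Y \<union> Z)" by (rule span_mono)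
      then show "X \<subseteq> span (Y \<union> Z)" using yspan by simp
    qed
    have Znz: "Z \<noteq> {0}"
    proof
      assume Z0: "Z = {0}"
      then have "Y \<union> Z = insert 0 Y" by blast
      then have "span (Y \<union> Z) = span Y" by (simp only: span_insert_0)
      with YZ spY YneX show False by (simp del: span_eq_iff)
    qed
    have oYZ: "b a c = 0" if "a \<in> Y" "c \<in> Z" for a c
    proof (rule orth_span[of Y "\<Union>(\<Y> - {Y})"])
      show "\<forall>a\<in>Y. \<forall>c\<in>\<Union>(\<Y> - {Y}). b a c = 0"
      proof (intro ballI)
        fix a c assume "a \<in> Y" "c \<in> \<Union>(\<Y> - {Y})"
        then obtain Y' where "Y' \<in> \<Y>" "Y \<noteq> Y'" "c \<in> Y'" by blast
        with yorth[OF Y] \<open>a \<in> Y\<close> show "b a c = 0" unfolding b_orth_def by metis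
      qed
      show "a \<in> span Y" using that(1) by (rule span_base)
      show "c \<in> span (\<Union>(\<Y> - {Y}))" using that Z_def by simp
    qed
    have oZY: "b c a = 0" if "a \<in> Y" "c \<in> Z" for a c
    proof (rule orth_span[of "\<Union>(\<Y> - {Y})" Y])
      show "\<forall>c\<in>\<Union>(\<Y> - {Y}). \<forall>a\<in>Y. b c a = 0"
      proof (intro ballI)
        fix a c assume "a \<in> Y" "c \<in> \<Union>(\<Y> - {Y})"
        then obtain Y' where "Y' \<in> \<Y>" "Y \<noteq> Y'" "c \<in> Y'" by blast
        with yorth[OF _ Y] \<open>a \<in> Y\<close> show "b c a = 0" unfolding b_orth_def by metis
      qed
      show "a \<in> span Y" using that(1) by (rule span_base)
      show "c \<in> span (\<Union>(\<Y> - {Y}))" using that Z_def by simp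
    qed
    have o1: "\<forall>a\<in>X. \<forall>c\<in>\<Union>(\<X>-{X}). b a c = 0"
    proof (intro ballI)
      fix a c assume "a \<in> X" "c \<in> \<Union>(\<X>-{X})"
      then obtain Y where "Y \<in> \<X>" "Y \<noteq> X" "c \<in> Y" by blast
      with orth X \<open>a \<in> X\<close> show "b a c = 0" unfolding b_orth_def by metis
    qed
    have o2: "\<forall>a\<in>\<Union>(\<X>-{X}). \<forall>c\<in>X. b a c = 0"
    proof (intro ballI)
      fix a c assume "c \<in> X" "a \<in> \<Union>(\<X>-{X})"
      then obtain Y where "Y \<in> \<X>" "Y \<noteq> X" "a \<in> Y" by blast
      with orth X \<open>c \<in> X\<close> show "b a c = 0" unfolding b_orth_def by metis
    qed
    have spX: "span X = X" using Xsub by simp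
    have oXR: "b a c = 0" if "a \<in> X" "c \<in> ?R" for a c
      by (rule orth_span[OF o1 span_base[OF that(1)] that(2)])
    have oRX: "b c a = 0" if "a \<in> X" "c \<in> ?R" for a c
      by (rule orth_span[OF o2 that(2) span_base[OF that(1)]])
    have YZ0: "Y \<inter> Z = {0}"
    proof -
      have "w = 0" if w: "w \<in> Y" "w \<in> Z" for w
      proof -
        have wX: "w \<in> X" using w YX by blast
        have a1: "\<forall>c\<in>Y \<union> Z. b w c = 0" using w oYZ oZY by blast
        have a2: "\<forall>c\<in>Y \<union> Z. b c w = 0" using w oYZ oZY by blast
        have bX1: "b w c = 0" if "c \<in> X" for c
          by (rule orth_span[of "{w}" "Y \<union> Z"]) (use a1 that YZ in \<open>auto intro: span_base\<close>)
        have bX2: "b c w = 0" if "c \<in> X" for c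
          by (rule orth_span[of "Y \<union> Z" "{w}"]) (use a2 that YZ in \<open>auto intro: span_base\<close>)
        show "w = 0"
        proof (rule orth_UNIV_zero[OF _ _ dd_span[OF dd]])
          show "\<forall>c\<in>\<Union>\<X>. b w c = 0"
          proof
            fix c assume "c \<in> \<Union>\<X>"
            show "b w c = 0"
            proof (cases "c \<in> X")
              case True then show ?thesis by (rule bX1)
            next
              case False then have "c \<in> \<Union>(\<X>-{X})" using \<open>c \<in> \<Union>\<X>\<close> by blast
              then show ?thesis using o1 wX by blast
            qed
          qed
          show "\<forall>c\<in>\<Union>\<X>. b c w = 0"
          proof
            fix c assume "c \<in> \<Union>\<X>"
            show "b c w = 0"
            proof (cases "c \<in> X")
              case True then show ?thesis by (rule bX2)
            next
              case False then have "c \<in> \<Union>(\<X>-{X})" using \<open>c \<in> \<Union>\<X>\<close> by blast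
              then show ?thesis using o2 wX by blast
            qed
          qed
        qed
      qed
      moreover have "0 \<in> Y" "0 \<in> Z" using Ysub Zsub by (auto intro: subspace_0)
      ultimately show ?thesis by blast
    qed
    define T where "T = span (Z \<union> \<Union>(\<X> - {X}))"
    have Tsub: "subspace T" unfolding T_def by simp
    have ZT: "Z \<subseteq> T" unfolding T_def by (rule subset_trans[OF _ span_superset]) blast
    have RT: "?R \<subseteq> T" unfolding T_def by (rule span_mono) blast
    have YT0: "Y \<inter> T = {0}"
    proof -
      have "w = 0" if w: "w \<in> Y" "w \<in> T" for w
      proof -
        from w(2) obtain z s where ws: "w = z + s" "z \<in> span Z" "s \<in> ?R"
          unfolding T_def span_Un by blast
        have spZ: "span Z = Z" using Zsub by (rule span_eq_iff[THEN iffD2])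
        have zZ: "z \<in> Z" using ws(2) unfolding spZ .
        have "s = w - z" using ws(1) by simp
        moreover have "w - z \<in> X" using w(1) YX zZ ZX Xsub by (auto intro: subspace_diff)
        ultimately have "s \<in> X \<inter> ?R" using ws(3) by simp
        then have "s = 0" using dd_indep[OF dd X] by blast
        then have "w = z" using ws(1) by simp
        then show "w = 0" using YZ0 w(1) zZ by blast
      qed
      moreover have "0 \<in> Y" "0 \<in> T" using Ysub Tsub by (auto intro: subspace_0)
      ultimately show ?thesis by blast
    qed
    have Tnz: "T \<noteq> {0}"
    proof
      assume "T = {0}"
      with ZT have "Z \<subseteq> {0}" by simp
      moreover have "0 \<in> Z" by (rule subspace_0[OF Zsub])
      ultimately have "Z = {0}" by blast
      with Znz show False ..
    qed
    have YneT: "Y \<noteq> T"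
    proof
      assume "Y = T"
      with YT0 have "Y = {0}" by simp
      with Ynz show False ..
    qed
    have spT: "span T = T" using Tsub by (rule span_eq_iff[THEN iffD2])
    have dd2: "direct_decomp scale {Y, T}"
      unfolding direct_decomp_def
    proof (intro conjI)
      show "finite {Y, T}" by simp
      show "\<forall>X\<in>{Y, T}. subspace X \<and> X \<noteq> {0}" using Ysub Tsub Ynz Tnz by blast
      have "\<Union>\<X> \<subseteq> span (\<Union>{Y, T})"
      proof
        fix c assume "c \<in> \<Union>\<X>"
        show "c \<in> span (\<Union>{Y, T})"
        proof (cases "c \<in> X")
          case True
          then have "c \<in> span (Y \<union> Z)" using YZ by simp
          moreover have "span (Y \<union> Z) \<subseteq> span (Y \<union> T)" using ZT by (intro span_mono) blast
          ultimately show ?thesis by auto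
        next
          case False then have "c \<in> \<Union>(\<X>-{X})" using \<open>c \<in> \<Union>\<X>\<close> by blast
          then have "c \<in> ?R" by (rule span_base)
          then have "c \<in> T" using RT by blast
          then have "c \<in> \<Union>{Y, T}" by simp
          then show ?thesis by (rule span_base)
        qed
      qed
      then have "span (\<Union>\<X>) \<subseteq> span (\<Union>{Y, T})" by (intro span_minimal) auto
      then show "span (\<Union>{Y, T}) = UNIV" using dd_span[OF dd] by auto
      have e1: "\<Union>({Y, T} - {Y}) = T" using YneT by auto
      have e2: "\<Union>({Y, T} - {T}) = Y" using YneT by auto
      have "Y \<inter> span (\<Union>({Y, T} - {Y})) = {0}" unfolding e1 spT by (rule YT0)
      moreover have "T \<inter> span (\<Union>({Y, T} - {T})) = {0}" unfolding e2 spY using YT0 by blast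
      ultimately show "\<forall>X\<in>{Y, T}. X \<inter> span (\<Union>({Y, T} - {X})) = {0}" by blast
    qed
    have oYT: "b_orth b Y T" "b_orth b T Y"
    proof -
      have a1: "\<forall>a\<in>Y. \<forall>c\<in>Z \<union> \<Union>(\<X> - {X}). b a c = 0"
        using oYZ o1 YX by blast
      have a2: "\<forall>c\<in>Z \<union> \<Union>(\<X> - {X}). \<forall>a\<in>Y. b c a = 0"
        using oZY o2 YX by blast
      show "b_orth b Y T" unfolding b_orth_def T_def
      proof (intro ballI)
        fix x y assume x: "x \<in> Y" and y: "y \<in> span (Z \<union> \<Union>(\<X> - {X}))"
        show "b x y = 0" by (rule orth_span[OF a1 span_base[OF x] y])
      qed
      show "b_orth b T Y" unfolding b_orth_def T_def
      proof (intro ballI)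
        fix x y assume y: "y \<in> Y" and x: "x \<in> span (Z \<union> \<Union>(\<X> - {X}))"
        show "b x y = 0" by (rule orth_span[OF a2 x span_base[OF y]])
      qed
    qed
    have orth2: "\<forall>X\<in>{Y,T}. \<forall>Y'\<in>{Y,T}. X \<noteq> Y' \<longrightarrow> b_orth b X Y'" using oYT by blast
    let ?f = "proj scale {Y, T} Y"
    define g where "g = (\<lambda>u. ?e u - ?f u)"
    have Y2: "Y \<in> {Y, T}" and T2: "T \<in> {Y, T}" by auto
    have fS: "?f \<in> Sym scale b" using proj_Sym_iff[OF dd2] orth2 by (auto simp: proj_set_def)
    have eS: "?e \<in> Sym scale b" using inS X by (auto simp: proj_set_def)
    have fl: "lin scale ?f" using proj_lin[OF dd2 Y2] .
    have el: "lin scale ?e" using proj_lin[OF dd X] .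
    have gl: "lin scale g" unfolding lin_def
    proof (intro conjI allI)
      fix x y show "g (x + y) = g x + g y" unfolding g_def by (simp add: lin_add[OF el] lin_add[OF fl])
    next
      fix c x show "g (scale c x) = scale c (g x)" unfolding g_def
        by (simp add: lin_scale[OF el] lin_scale[OF fl] scale_right_diff_distrib)
    qed
    have esym: "b (?e u) v = b u (?e v)" for u v using eS by (simp add: Sym_iff)
    have fsym: "b (?f u) v = b u (?f v)" for u v using fS by (simp add: Sym_iff)
    have gS: "g \<in> Sym scale b" unfolding Sym_iff
      using gl esym fsym by (simp add: g_def bRdiff bLdiff)
    have ef: "?e (?f u) = ?f u" for u using proj_self[OF dd X] proj_in[OF dd2 Y2] YX by blast
    have fe: "?f (?e u) = ?f u" for u
    proof -
      have h: "u - ?e u \<in> T" using proj_rest[OF dd X] RT by blast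
      have e1: "\<Union>({Y, T} - {Y}) = T" using YneT by auto
      have "u - ?e u \<in> span (\<Union>({Y,T} - {Y}))" unfolding e1 spT by (rule h)
      then have "?f (u - ?e u) = 0" by (rule proj_restz[OF dd2 Y2])
      then show ?thesis using lin_diff[OF fl] by simp
    qed
    have ff: "?f (?f u) = ?f u" for u using proj_idem[OF dd2 Y2] .
    have ee: "?e (?e u) = ?e u" for u using proj_idem[OF dd X] .
    have gg: "g (g u) = g u" for u
      unfolding g_def using lin_diff[OF el] lin_diff[OF fl] ef fe ff ee by simp
    have fg: "?f (g u) = 0" for u unfolding g_def using lin_diff[OF fl] fe ff by simp
    have gf: "g (?f u) = 0" for u unfolding g_def using ef ff by simp
    obtain y where y: "y \<in> Y" "y \<noteq> 0" using Ynz Ysub subspace_0 by blast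
    obtain z where z: "z \<in> Z" "z \<noteq> 0" using Znz Zsub subspace_0 by blast
    have fy: "?f y = y" using proj_self[OF dd2 Y2 y(1)] .
    have fz: "?f z = 0" using proj_other[OF dd2 Y2 T2 YneT] z(1) ZT by blast
    have ez: "?e z = z" using proj_self[OF dd X] z(1) ZX by blast
    have ey: "?e y = y" using proj_self[OF dd X] y(1) YX by blast
    have gz: "g z = z" unfolding g_def using ez fz by simp
    have gy: "g y = 0" unfolding g_def using ey fy by simp
    have split: "?e = (\<lambda>u. ?f u + g u)" unfolding g_def by simp
    have "?f \<noteq> (\<lambda>_. 0)" using fy y(2) by (metis)
    moreover have "?f \<noteq> id" using fz z(2) by (metis id_apply)
    moreover have "g \<noteq> (\<lambda>_. 0)" using gz z(2) by metis
    moreover have "g \<noteq> id" using gy y(2) by (metis id_apply)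
    moreover have "j_idempotent scale ?f" using ff by (simp add: jidem_iff fun_eq_iff)
    moreover have "j_idempotent scale g" using gg by (simp add: jidem_iff fun_eq_iff)
    moreover have "j_orthogonal scale ?f g" using jorth_I[OF fl gl] fg gf by blast
    ultimately show False using prim fS gS split unfolding j_primitive_def by blast
  qed
  show ?thesis unfolding fully_refined_def using pd main by blast
qed

end



context vector_space
begin

lemma lin_mh: "lin scale f \<Longrightarrow> module_hom scale scale f"
  by (simp add: module_hom_iff_linear linear_lin)

lemma span_img: "lin scale f \<Longrightarrow> span (f ` A) = f ` span A"
  using module_hom.span_image[OF lin_mh] by blast

lemma sub_img: "lin scale f \<Longrightarrow> subspace X \<Longrightarrow> subspace (f ` X)"
  using module_hom.subspace_image[OF lin_mh] by blast

lemma rest_img: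
  assumes al: "lin scale \<alpha>" and bj: "bij \<alpha>" and X: "X \<in> \<X>"
  shows "span (\<Union>((\<lambda>X. \<alpha> ` X) ` \<X> - {\<alpha> ` X})) = \<alpha> ` span (\<Union>(\<X> - {X}))"
proof -
  have inj: "inj \<alpha>" using bj by (rule bij_is_inj)
  have injI: "inj (\<lambda>X. \<alpha> ` X)" by (rule injI) (simp add: inj_image_eq_iff[OF inj])
  have "(\<lambda>X. \<alpha> ` X) ` \<X> - {\<alpha> ` X} = (\<lambda>X. \<alpha> ` X) ` (\<X> - {X})"
    using image_set_diff[OF injI, of \<X> "{X}"] by simp
  then have "\<Union>((\<lambda>X. \<alpha> ` X) ` \<X> - {\<alpha> ` X}) = \<alpha> ` \<Union>(\<X> - {X})"
    by (simp add: image_Union)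
  then show ?thesis using span_img[OF al] by simp
qed

lemma img_dd:
  assumes dd: "direct_decomp scale \<X>" and al: "lin scale \<alpha>" and bj: "bij \<alpha>"
  shows "direct_decomp scale ((\<lambda>X. \<alpha> ` X) ` \<X>)"
proof -
  have inj: "inj \<alpha>" using bj by (rule bij_is_inj)
  have a0: "\<alpha> ` {0} = {0}" using lin_0[OF al] by simp
  have c1: "finite ((\<lambda>X. \<alpha> ` X) ` \<X>)" using dd_fin[OF dd] by simp
  have c2: "subspace X' \<and> X' \<noteq> {0}" if "X' \<in> (\<lambda>X. \<alpha> ` X) ` \<X>" for X'
  proof -
    from that obtain X where X: "X \<in> \<X>" and X': "X' = \<alpha> ` X" by blast
    have s: "subspace X'" unfolding X' by (rule sub_img[OF al dd_sub[OF dd X]])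
    have n: "X' \<noteq> {0}"
    proof
      assume "X' = {0}"
      then have "\<alpha> ` X = \<alpha> ` {0}" unfolding X' a0 .
      then have "X = {0}" by (rule inj_image_eq_iff[OF inj, THEN iffD1])
      with dd_nz[OF dd X] show False by simp
    qed
    from s n show ?thesis ..
  qed
  have c3: "X' \<inter> span (\<Union>((\<lambda>X. \<alpha> ` X) ` \<X> - {X'})) = {0}" if "X' \<in> (\<lambda>X. \<alpha> ` X) ` \<X>" for X'
  proof -
    from that obtain X where X: "X \<in> \<X>" and X': "X' = \<alpha> ` X" by blast
    have "\<alpha> ` X \<inter> \<alpha> ` span (\<Union>(\<X> - {X})) = \<alpha> ` (X \<inter> span (\<Union>(\<X> - {X})))"
      by (rule image_Int[OF inj, symmetric])
    also have "\<dots> = {0}" unfolding dd_indep[OF dd X] by (rule a0)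
    finally show ?thesis unfolding X' rest_img[OF al bj X] .
  qed
  have "\<Union>((\<lambda>X. \<alpha> ` X) ` \<X>) = \<alpha> ` \<Union>\<X>" by (simp add: image_Union)
  then have "span (\<Union>((\<lambda>X. \<alpha> ` X) ` \<X>)) = \<alpha> ` span (\<Union>\<X>)" using span_img[OF al] by simp
  also have "\<dots> = UNIV" using bj dd_span[OF dd] by (simp add: bij_is_surj)
  finally have c4: "span (\<Union>((\<lambda>X. \<alpha> ` X) ` \<X>)) = UNIV" .
  show ?thesis unfolding direct_decomp_def
  proof (intro conjI)
    show "\<forall>X\<in>(\<lambda>X. \<alpha> ` X) ` \<X>. subspace X \<and> X \<noteq> {0}" using c2 by (intro ballI)
    show "\<forall>X\<in>(\<lambda>X. \<alpha> ` X) ` \<X>. X \<inter> span (\<Union>((\<lambda>X. \<alpha> ` X) ` \<X> - {X})) = {0}"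
      using c3 by (intro ballI)
  qed (fact c1 c4)+
qed

lemma proj_img:
  assumes dd: "direct_decomp scale \<X>" and al: "lin scale \<alpha>" and bj: "bij \<alpha>" and X: "X \<in> \<X>"
  shows "proj scale ((\<lambda>X. \<alpha> ` X) ` \<X>) (\<alpha> ` X) = \<alpha> \<circ> proj scale \<X> X \<circ> inv \<alpha>"
proof
  fix u
  have dd': "direct_decomp scale ((\<lambda>X. \<alpha> ` X) ` \<X>)" by (rule img_dd[OF dd al bj])
  have X': "\<alpha> ` X \<in> (\<lambda>X. \<alpha> ` X) ` \<X>" by (rule image_eqI[of _ _ X]) (simp_all add: X)
  have fi: "\<alpha> (inv \<alpha> u) = u" using bj by (simp add: bij_is_surj surj_f_inv_f)
  let ?v = "inv \<alpha> u"
  show "proj scale ((\<lambda>X. \<alpha> ` X) ` \<X>) (\<alpha> ` X) u = (\<alpha> \<circ> proj scale \<X> X \<circ> inv \<alpha>) u"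
  proof (simp only: o_apply, rule proj_eq[OF dd' X'])
    show "\<alpha> (proj scale \<X> X ?v) \<in> \<alpha> ` X" by (rule imageI) (rule proj_in[OF dd X])
    have h: "\<alpha> (?v - proj scale \<X> X ?v) \<in> \<alpha> ` span (\<Union>(\<X> - {X}))"
      by (rule imageI) (rule proj_rest[OF dd X])
    have eq: "u - \<alpha> (proj scale \<X> X ?v) = \<alpha> (?v - proj scale \<X> X ?v)"
      using lin_diff[OF al] fi by simp
    show "u - \<alpha> (proj scale \<X> X ?v) \<in> span (\<Union>((\<lambda>X. \<alpha> ` X) ` \<X> - {\<alpha> ` X}))"
      unfolding eq rest_img[OF al bj X] by (rule h)
  qed
qed

lemma part3:
  assumes dd: "direct_decomp scale \<X>" and al: "lin scale \<alpha>" and bj: "bij \<alpha>"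
  shows "(\<lambda>X. \<alpha> ` X) ` \<X> = decomp_of (conj_set \<alpha> (proj_set scale \<X>))
    \<and> conj_set \<alpha> (proj_set scale \<X>) = proj_set scale ((\<lambda>X. \<alpha> ` X) ` \<X>)"
proof
  have sinv: "surj (inv \<alpha>)" using bj by (simp add: bij_is_inj inj_imp_surj_inv)
  have r: "range (\<alpha> \<circ> proj scale \<X> X \<circ> inv \<alpha>) = \<alpha> ` X" if X: "X \<in> \<X>" for X
  proof -
    have "range (\<alpha> \<circ> proj scale \<X> X \<circ> inv \<alpha>) = \<alpha> ` proj scale \<X> X ` range (inv \<alpha>)"
      by (simp only: image_comp o_assoc)
    also have "\<dots> = \<alpha> ` X" using sinv range_proj[OF dd X] by simp
    finally show ?thesis .
  qed
  show "(\<lambda>X. \<alpha> ` X) ` \<X> = decomp_of (conj_set \<alpha> (proj_set scale \<X>))"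
    unfolding decomp_of_def conj_set_def proj_set_def image_image
    by (rule image_cong[OF refl]) (rule r[symmetric])
  show "conj_set \<alpha> (proj_set scale \<X>) = proj_set scale ((\<lambda>X. \<alpha> ` X) ` \<X>)"
    unfolding conj_set_def proj_set_def image_image
    by (rule image_cong[OF refl]) (rule proj_img[OF dd al bj, symmetric])
qed

end



context vector_space
begin

lemma conj_facts:
  assumes al: "lin scale \<alpha>" and ab: "bij \<alpha>"
  shows conj_jprod: "jprod scale (\<alpha> \<circ> f \<circ> inv \<alpha>) (\<alpha> \<circ> g \<circ> inv \<alpha>) = \<alpha> \<circ> jprod scale f g \<circ> inv \<alpha>"
    and conj_comp3: "(\<alpha> \<circ> f \<circ> inv \<alpha>) \<circ> (\<alpha> \<circ> g \<circ> inv \<alpha>) \<circ> (\<alpha> \<circ> f \<circ> inv \<alpha>) = \<alpha> \<circ> (f \<circ> g \<circ> f) \<circ> inv \<alpha>"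
    and conj_zero: "\<alpha> \<circ> (\<lambda>_. 0) \<circ> inv \<alpha> = (\<lambda>_. 0)"
    and conj_id: "\<alpha> \<circ> id \<circ> inv \<alpha> = id"
    and conj_add: "\<alpha> \<circ> (\<lambda>u. f u + g u) \<circ> inv \<alpha> = (\<lambda>u. (\<alpha> \<circ> f \<circ> inv \<alpha>) u + (\<alpha> \<circ> g \<circ> inv \<alpha>) u)"
    and conj_back: "inv \<alpha> \<circ> (\<alpha> \<circ> f \<circ> inv \<alpha>) \<circ> inv (inv \<alpha>) = f"
    and conj_back2: "\<alpha> \<circ> (inv \<alpha> \<circ> f \<circ> inv (inv \<alpha>)) \<circ> inv \<alpha> = f"
proof -
  have fi: "\<alpha> (inv \<alpha> u) = u" for u using ab by (simp add: bij_is_surj surj_f_inv_f)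
  have if_: "inv \<alpha> (\<alpha> x) = x" for x using ab by (simp add: bij_is_inj)
  have ii: "inv (inv \<alpha>) = \<alpha>" using ab by (rule inv_inv_eq)
  show "jprod scale (\<alpha> \<circ> f \<circ> inv \<alpha>) (\<alpha> \<circ> g \<circ> inv \<alpha>) = \<alpha> \<circ> jprod scale f g \<circ> inv \<alpha>"
    by (simp add: fun_eq_iff jprod_def if_ lin_add[OF al] lin_scale[OF al])
  show "(\<alpha> \<circ> f \<circ> inv \<alpha>) \<circ> (\<alpha> \<circ> g \<circ> inv \<alpha>) \<circ> (\<alpha> \<circ> f \<circ> inv \<alpha>) = \<alpha> \<circ> (f \<circ> g \<circ> f) \<circ> inv \<alpha>"
    by (simp add: fun_eq_iff if_)
  show "\<alpha> \<circ> (\<lambda>_. 0) \<circ> inv \<alpha> = (\<lambda>_. 0)" by (simp add: fun_eq_iff lin_0[OF al])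
  show "\<alpha> \<circ> id \<circ> inv \<alpha> = id" by (simp add: fun_eq_iff fi)
  show "\<alpha> \<circ> (\<lambda>u. f u + g u) \<circ> inv \<alpha> = (\<lambda>u. (\<alpha> \<circ> f \<circ> inv \<alpha>) u + (\<alpha> \<circ> g \<circ> inv \<alpha>) u)"
    by (simp add: fun_eq_iff lin_add[OF al])
  show "inv \<alpha> \<circ> (\<alpha> \<circ> f \<circ> inv \<alpha>) \<circ> inv (inv \<alpha>) = f" by (simp add: fun_eq_iff ii if_)
  show "\<alpha> \<circ> (inv \<alpha> \<circ> f \<circ> inv (inv \<alpha>)) \<circ> inv \<alpha> = f" by (simp add: fun_eq_iff ii fi)
qed

lemma conj_idem:
  assumes al: "lin scale \<alpha>" and ab: "bij \<alpha>" and "j_idempotent scale f"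
  shows "j_idempotent scale (\<alpha> \<circ> f \<circ> inv \<alpha>)"
proof -
  have e: "jprod scale f f = f" using assms(3) unfolding j_idempotent_def .
  have "jprod scale (\<alpha> \<circ> f \<circ> inv \<alpha>) (\<alpha> \<circ> f \<circ> inv \<alpha>) = \<alpha> \<circ> jprod scale f f \<circ> inv \<alpha>"
    by (rule conj_jprod[OF al ab])
  also have "\<dots> = \<alpha> \<circ> f \<circ> inv \<alpha>" by (simp only: e)
  finally show ?thesis unfolding j_idempotent_def .
qed

lemma conj_orth:
  assumes al: "lin scale \<alpha>" and ab: "bij \<alpha>" and "j_orthogonal scale f g"
  shows "j_orthogonal scale (\<alpha> \<circ> f \<circ> inv \<alpha>) (\<alpha> \<circ> g \<circ> inv \<alpha>)"
proof -
  have o1: "jprod scale f g = (\<lambda>_. 0)" and o2: "f \<circ> g \<circ> f = (\<lambda>_. 0)" and o3: "g \<circ> f \<circ> g = (\<lambda>_. 0)"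
    using assms(3) unfolding j_orthogonal_def by auto
  have "jprod scale (\<alpha> \<circ> f \<circ> inv \<alpha>) (\<alpha> \<circ> g \<circ> inv \<alpha>) = \<alpha> \<circ> jprod scale f g \<circ> inv \<alpha>"
    by (rule conj_jprod[OF al ab])
  also have "\<dots> = (\<lambda>_. 0)" unfolding o1 by (rule conj_zero[OF al ab])
  finally have p1: "jprod scale (\<alpha> \<circ> f \<circ> inv \<alpha>) (\<alpha> \<circ> g \<circ> inv \<alpha>) = (\<lambda>_. 0)" .
  have "(\<alpha> \<circ> f \<circ> inv \<alpha>) \<circ> (\<alpha> \<circ> g \<circ> inv \<alpha>) \<circ> (\<alpha> \<circ> f \<circ> inv \<alpha>) = \<alpha> \<circ> (f \<circ> g \<circ> f) \<circ> inv \<alpha>"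
    by (rule conj_comp3[OF al ab])
  also have "\<dots> = (\<lambda>_. 0)" unfolding o2 by (rule conj_zero[OF al ab])
  finally have p2: "(\<alpha> \<circ> f \<circ> inv \<alpha>) \<circ> (\<alpha> \<circ> g \<circ> inv \<alpha>) \<circ> (\<alpha> \<circ> f \<circ> inv \<alpha>) = (\<lambda>_. 0)" .
  have "(\<alpha> \<circ> g \<circ> inv \<alpha>) \<circ> (\<alpha> \<circ> f \<circ> inv \<alpha>) \<circ> (\<alpha> \<circ> g \<circ> inv \<alpha>) = \<alpha> \<circ> (g \<circ> f \<circ> g) \<circ> inv \<alpha>"
    by (rule conj_comp3[OF al ab])
  also have "\<dots> = (\<lambda>_. 0)" unfolding o3 by (rule conj_zero[OF al ab])
  finally have p3: "(\<alpha> \<circ> g \<circ> inv \<alpha>) \<circ> (\<alpha> \<circ> f \<circ> inv \<alpha>) \<circ> (\<alpha> \<circ> g \<circ> inv \<alpha>) = (\<lambda>_. 0)" .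
  show ?thesis unfolding j_orthogonal_def using p1 p2 p3 by (intro conjI)
qed

end

context bset
begin

lemma isomD:
  assumes "(\<alpha>, \<alpha>') \<in> Isom_star scale sW b"
  shows "lin scale \<alpha>" "bij \<alpha>" "lin sW \<alpha>'" "bij \<alpha>'" "\<And>u v. b (\<alpha> u) (\<alpha> v) = \<alpha>' (b u v)"
  using assms by (auto simp: Isom_star_def linear_lin vector_space.linear_lin[OF W])

lemma isom_inv:
  assumes i: "(\<alpha>, \<alpha>') \<in> Isom_star scale sW b"
  shows "(inv \<alpha>, inv \<alpha>') \<in> Isom_star scale sW b"
proof -
  note d = isomD[OF i]
  have il': "lin sW (inv \<alpha>')" by (rule vector_space.lin_inv[OF W d(3) d(4)])
  have il: "lin scale (inv \<alpha>)" by (rule lin_inv[OF d(1) d(2)])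
  have fi: "\<alpha> (inv \<alpha> u) = u" for u using d(2) by (simp add: bij_is_surj surj_f_inv_f)
  have if': "inv \<alpha>' (\<alpha>' w) = w" for w using d(4) by (simp add: bij_is_inj)
  have h: "b (inv \<alpha> u) (inv \<alpha> v) = inv \<alpha>' (b u v)" for u v
  proof -
    have "\<alpha>' (b (inv \<alpha> u) (inv \<alpha> v)) = b u v" using d(5)[of "inv \<alpha> u" "inv \<alpha> v"] fi by simp
    then have "inv \<alpha>' (\<alpha>' (b (inv \<alpha> u) (inv \<alpha> v))) = inv \<alpha>' (b u v)" by simp
    then show ?thesis using if' by simp
  qed
  show ?thesis unfolding Isom_star_def
    using il il' d(2) d(4) h by (simp add: bij_imp_bij_inv linear_lin vector_space.linear_lin[OF W])
qed

lemma conj_Sym: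
  assumes i: "(\<alpha>, \<alpha>') \<in> Isom_star scale sW b" and f: "f \<in> Sym scale b"
  shows "\<alpha> \<circ> f \<circ> inv \<alpha> \<in> Sym scale b"
proof -
  note d = isomD[OF i]
  have fl: "lin scale f" and fs: "\<And>u v. b (f u) v = b u (f v)" using f by (auto simp: Sym_iff)
  have il: "lin scale (inv \<alpha>)" by (rule lin_inv[OF d(1) d(2)])
  have fi: "\<alpha> (inv \<alpha> u) = u" for u using d(2) by (simp add: bij_is_surj surj_f_inv_f)
  have l: "lin scale (\<alpha> \<circ> f \<circ> inv \<alpha>)" by (intro lin_comp d(1) fl il)
  have s: "b ((\<alpha> \<circ> f \<circ> inv \<alpha>) u) v = b u ((\<alpha> \<circ> f \<circ> inv \<alpha>) v)" for u v
  proof -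
    have "b ((\<alpha> \<circ> f \<circ> inv \<alpha>) u) v = b (\<alpha> (f (inv \<alpha> u))) (\<alpha> (inv \<alpha> v))" by (simp add: fi)
    also have "\<dots> = \<alpha>' (b (f (inv \<alpha> u)) (inv \<alpha> v))" by (rule d(5))
    also have "\<dots> = \<alpha>' (b (inv \<alpha> u) (f (inv \<alpha> v)))" by (simp add: fs)
    also have "\<dots> = b (\<alpha> (inv \<alpha> u)) (\<alpha> (f (inv \<alpha> v)))" by (rule d(5)[symmetric])
    also have "\<dots> = b u ((\<alpha> \<circ> f \<circ> inv \<alpha>) v)" by (simp add: fi)
    finally show ?thesis .
  qed
  show ?thesis using l s by (simp add: Sym_iff)
qed

lemma prim_conj:
  assumes i: "(\<alpha>, \<alpha>') \<in> Isom_star scale sW b" and p: "j_primitive scale (Sym scale b) e"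
  shows "j_primitive scale (Sym scale b) (\<alpha> \<circ> e \<circ> inv \<alpha>)"
proof -
  note d = isomD[OF i]
  have i2: "(inv \<alpha>, inv \<alpha>') \<in> Isom_star scale sW b" by (rule isom_inv[OF i])
  note d2 = isomD[OF i2]
  have eS: "e \<in> Sym scale b" and eid: "j_idempotent scale e" using p by (auto simp: j_primitive_def)
  have nos: "\<not> (\<exists>f\<in>Sym scale b. \<exists>g\<in>Sym scale b. j_idempotent scale f \<and> j_idempotent scale g \<and>
          f \<noteq> (\<lambda>_. 0) \<and> f \<noteq> id \<and> g \<noteq> (\<lambda>_. 0) \<and> g \<noteq> id \<and>
          j_orthogonal scale f g \<and> e = (\<lambda>u. f u + g u))"
    using p unfolding j_primitive_def by blast
  have nos2: "\<not> (\<exists>f\<in>Sym scale b. \<exists>g\<in>Sym scale b. j_idempotent scale f \<and> j_idempotent scale g \<and>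
          f \<noteq> (\<lambda>_. 0) \<and> f \<noteq> id \<and> g \<noteq> (\<lambda>_. 0) \<and> g \<noteq> id \<and>
          j_orthogonal scale f g \<and> \<alpha> \<circ> e \<circ> inv \<alpha> = (\<lambda>u. f u + g u))"
  proof
    assume "\<exists>f\<in>Sym scale b. \<exists>g\<in>Sym scale b. j_idempotent scale f \<and> j_idempotent scale g \<and>
          f \<noteq> (\<lambda>_. 0) \<and> f \<noteq> id \<and> g \<noteq> (\<lambda>_. 0) \<and> g \<noteq> id \<and>
          j_orthogonal scale f g \<and> \<alpha> \<circ> e \<circ> inv \<alpha> = (\<lambda>u. f u + g u)"
    then obtain f g where fS: "f \<in> Sym scale b" and gS: "g \<in> Sym scale b"
      and fi: "j_idempotent scale f" and gi: "j_idempotent scale g"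
      and f0: "f \<noteq> (\<lambda>_. 0)" and f1: "f \<noteq> id" and g0: "g \<noteq> (\<lambda>_. 0)" and g1: "g \<noteq> id"
      and o: "j_orthogonal scale f g" and e: "\<alpha> \<circ> e \<circ> inv \<alpha> = (\<lambda>u. f u + g u)"
      by blast
    define f' where "f' = inv \<alpha> \<circ> f \<circ> inv (inv \<alpha>)"
    define g' where "g' = inv \<alpha> \<circ> g \<circ> inv (inv \<alpha>)"
    have f'S: "f' \<in> Sym scale b" unfolding f'_def by (rule conj_Sym[OF i2 fS])
    have g'S: "g' \<in> Sym scale b" unfolding g'_def by (rule conj_Sym[OF i2 gS])
    have f'i: "j_idempotent scale f'" unfolding f'_def by (rule conj_idem[OF d2(1) d2(2) fi])
    have g'i: "j_idempotent scale g'" unfolding g'_def by (rule conj_idem[OF d2(1) d2(2) gi])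
    have o': "j_orthogonal scale f' g'" unfolding f'_def g'_def by (rule conj_orth[OF d2(1) d2(2) o])
    have bf: "\<alpha> \<circ> f' \<circ> inv \<alpha> = f" unfolding f'_def by (rule conj_back2[OF d(1) d(2)])
    have bg: "\<alpha> \<circ> g' \<circ> inv \<alpha> = g" unfolding g'_def by (rule conj_back2[OF d(1) d(2)])
    have f'0: "f' \<noteq> (\<lambda>_. 0)" using bf f0 conj_zero[OF d(1) d(2)] by metis
    have g'0: "g' \<noteq> (\<lambda>_. 0)" using bg g0 conj_zero[OF d(1) d(2)] by metis
    have f'1: "f' \<noteq> id" using bf f1 conj_id[OF d(1) d(2)] by metis
    have g'1: "g' \<noteq> id" using bg g1 conj_id[OF d(1) d(2)] by metis
    have "e = inv \<alpha> \<circ> (\<alpha> \<circ> e \<circ> inv \<alpha>) \<circ> inv (inv \<alpha>)" by (rule conj_back[OF d(1) d(2), symmetric])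
    also have "\<dots> = (\<lambda>u. f' u + g' u)" unfolding e f'_def g'_def by (rule conj_add[OF d2(1) d2(2)])
    finally have e': "e = (\<lambda>u. f' u + g' u)" .
    have P: "j_idempotent scale f' \<and> j_idempotent scale g' \<and>
          f' \<noteq> (\<lambda>_. 0) \<and> f' \<noteq> id \<and> g' \<noteq> (\<lambda>_. 0) \<and> g' \<noteq> id \<and>
          j_orthogonal scale f' g' \<and> e = (\<lambda>u. f' u + g' u)"
      using f'i g'i f'0 f'1 g'0 g'1 o' e' by (intro conjI)
    have "\<exists>f\<in>Sym scale b. \<exists>g\<in>Sym scale b. j_idempotent scale f \<and> j_idempotent scale g \<and>
          f \<noteq> (\<lambda>_. 0) \<and> f \<noteq> id \<and> g \<noteq> (\<lambda>_. 0) \<and> g \<noteq> id \<and>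
          j_orthogonal scale f g \<and> e = (\<lambda>u. f u + g u)"
      using f'S g'S P by blast
    with nos show False by contradiction
  qed
  have cS: "\<alpha> \<circ> e \<circ> inv \<alpha> \<in> Sym scale b" by (rule conj_Sym[OF i eS])
  have ci: "j_idempotent scale (\<alpha> \<circ> e \<circ> inv \<alpha>)" by (rule conj_idem[OF d(1) d(2) eid])
  show ?thesis unfolding j_primitive_def using cS ci nos2 by (intro conjI)
qed

lemma frame_conj:
  assumes i: "(\<alpha>, \<alpha>') \<in> Isom_star scale sW b" and F: "j_frame scale (Sym scale b) F"
  shows "j_frame scale (Sym scale b) (conj_set \<alpha> F)"
proof -
  note d = isomD[OF i]
  let ?c = "\<lambda>e. \<alpha> \<circ> e \<circ> inv \<alpha>"
  have fin: "finite F" and prim: "\<And>e. e \<in> F \<Longrightarrow> j_primitive scale (Sym scale b) e"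
    and orth: "\<And>e f. e \<in> F \<Longrightarrow> f \<in> F \<Longrightarrow> e \<noteq> f \<Longrightarrow> j_orthogonal scale e f"
    and sm: "(\<lambda>u. \<Sum>e\<in>F. e u) = id" using F by (auto simp: j_frame_def)
  have inj: "inj_on ?c F"
  proof (rule inj_onI)
    fix e f assume "?c e = ?c f"
    then have "inv \<alpha> \<circ> ?c e \<circ> inv (inv \<alpha>) = inv \<alpha> \<circ> ?c f \<circ> inv (inv \<alpha>)" by simp
    then show "e = f" unfolding conj_back[OF d(1) d(2)] .
  qed
  have c1: "finite (conj_set \<alpha> F)" unfolding conj_set_def using fin by (rule finite_imageI)
  have c2: "\<forall>e\<in>conj_set \<alpha> F. j_primitive scale (Sym scale b) e"
  proof
    fix e' assume "e' \<in> conj_set \<alpha> F"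
    then obtain e where "e \<in> F" "e' = ?c e" unfolding conj_set_def by blast
    then show "j_primitive scale (Sym scale b) e'" using prim_conj[OF i prim] by simp
  qed
  have c3: "\<forall>e\<in>conj_set \<alpha> F. \<forall>f\<in>conj_set \<alpha> F. e \<noteq> f \<longrightarrow> j_orthogonal scale e f"
  proof (intro ballI impI)
    fix e' f' assume "e' \<in> conj_set \<alpha> F" "f' \<in> conj_set \<alpha> F" "e' \<noteq> f'"
    then obtain e f where ef: "e \<in> F" "e' = ?c e" "f \<in> F" "f' = ?c f" unfolding conj_set_def by blast
    with \<open>e' \<noteq> f'\<close> have "e \<noteq> f" by blast
    with ef orth conj_orth[OF d(1) d(2)] show "j_orthogonal scale e' f'" by simp
  qed
  have c4: "(\<lambda>u. \<Sum>e\<in>conj_set \<alpha> F. e u) = id"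
  proof
    fix u
    have fi: "\<alpha> (inv \<alpha> u) = u" using d(2) by (simp add: bij_is_surj surj_f_inv_f)
    have s: "(\<Sum>e\<in>F. e w) = w" for w using fun_cong[OF sm, of w] by simp
    have "(\<Sum>e\<in>conj_set \<alpha> F. e u) = (\<Sum>e\<in>F. \<alpha> (e (inv \<alpha> u)))"
      unfolding conj_set_def by (simp add: sum.reindex[OF inj])
    also have "\<dots> = \<alpha> (\<Sum>e\<in>F. e (inv \<alpha> u))" by (rule lin_sum[OF d(1), symmetric])
    also have "\<dots> = u" using s fi by simp
    finally show "(\<Sum>e\<in>conj_set \<alpha> F. e u) = id u" by simp
  qed
  show ?thesis unfolding j_frame_def using c1 c2 c3 c4 by (intro conjI)
qed

end



theorem theorem4p29:
  fixes sV :: "'k::{field,finite} \<Rightarrow> 'v::ab_group_add \<Rightarrow> 'v"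
    and sW :: "'k \<Rightarrow> 'w::ab_group_add \<Rightarrow> 'w"
    and b :: "'v \<Rightarrow> 'v \<Rightarrow> 'w"
    and \<X> :: "'v set set"
  assumes odd_char: "odd CHAR('k)"
    and V: "\<exists>B. finite_dimensional_vector_space sV B"
    and W: "vector_space sW"
    and bil: "bilinear_map sV sW b"
    and herm: "hermitian sV sW b"
    and nd: "nondegenerate b"
    and dd: "direct_decomp sV \<X>"
  shows "(proj_set sV \<X> \<subseteq> Sym sV b \<longleftrightarrow> perp_decomp sV b \<X>)
    \<and> (fully_refined sV b \<X> \<longleftrightarrow> j_frame sV (Sym sV b) (proj_set sV \<X>))
    \<and> (\<forall>\<alpha> \<alpha>'. perp_decomp sV b \<X> \<and> (\<alpha>, \<alpha>') \<in> Isom_star sV sW b \<longrightarrow>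
          (\<lambda>X. \<alpha> ` X) ` \<X> = decomp_of (conj_set \<alpha> (proj_set sV \<X>)) \<and>
          conj_set \<alpha> (proj_set sV \<X>) = proj_set sV ((\<lambda>X. \<alpha> ` X) ` \<X>))
    \<and> (\<forall>\<alpha> \<alpha>' F. (\<alpha>, \<alpha>') \<in> Isom_star sV sW b \<and> j_frame sV (Sym sV b) F \<longrightarrow>
          j_frame sV (Sym sV b) (conj_set \<alpha> F))"
proof -
  obtain B where "finite_dimensional_vector_space sV B" using V by blast
  then have vs: "vector_space sV" by (rule finite_dimensional_vector_space.axioms(1))
  have two: "(2::'k) \<noteq> 0"
  proof
    assume "(2::'k) = 0"
    then have "of_nat 2 = (0::'k)" by simp
    then have d: "CHAR('k) dvd 2" by (simp only: of_nat_eq_0_iff_char_dvd)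
    then have "CHAR('k) \<le> 2" by (rule dvd_imp_le) simp
    moreover have "CHAR('k) \<noteq> 0" using d by (metis dvd_0_left_iff zero_neq_numeral)
    moreover have "CHAR('k) \<noteq> Suc 0" by (rule CHAR_not_1)
    ultimately have "CHAR('k) = 2" by linarith
    with odd_char show False by simp
  qed
  interpret bset sV sW b
    by (rule bset.intro[OF vs]) (rule bset_axioms.intro[OF W bil nd two])
  have p1: "proj_set sV \<X> \<subseteq> Sym sV b \<longleftrightarrow> perp_decomp sV b \<X>"
    using proj_Sym_iff[OF dd] perp_iff[OF dd] by simp
  have p2: "fully_refined sV b \<X> \<longleftrightarrow> j_frame sV (Sym sV b) (proj_set sV \<X>)"
    using frame_of_refined[OF dd] refined_of_frame[OF dd] by blast
  have p3: "\<forall>\<alpha> \<alpha>'. perp_decomp sV b \<X> \<and> (\<alpha>, \<alpha>') \<in> Isom_star sV sW b \<longrightarrow>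
          (\<lambda>X. \<alpha> ` X) ` \<X> = decomp_of (conj_set \<alpha> (proj_set sV \<X>)) \<and>
          conj_set \<alpha> (proj_set sV \<X>) = proj_set sV ((\<lambda>X. \<alpha> ` X) ` \<X>)"
  proof (intro allI impI)
    fix \<alpha> \<alpha>' assume h: "perp_decomp sV b \<X> \<and> (\<alpha>, \<alpha>') \<in> Isom_star sV sW b"
    then have i: "(\<alpha>, \<alpha>') \<in> Isom_star sV sW b" by simp
    show "(\<lambda>X. \<alpha> ` X) ` \<X> = decomp_of (conj_set \<alpha> (proj_set sV \<X>)) \<and>
          conj_set \<alpha> (proj_set sV \<X>) = proj_set sV ((\<lambda>X. \<alpha> ` X) ` \<X>)"
      by (rule part3[OF dd isomD(1)[OF i] isomD(2)[OF i]])
  qed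
  have p4: "\<forall>\<alpha> \<alpha>' F. (\<alpha>, \<alpha>') \<in> Isom_star sV sW b \<and> j_frame sV (Sym sV b) F \<longrightarrow>
          j_frame sV (Sym sV b) (conj_set \<alpha> F)"
    using frame_conj by blast
  show ?thesis using p1 p2 p3 p4 by (intro conjI)
qed


end
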